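(* Let $n_1,n_3,n_5>0$ and $\theta_1,\theta_3,\theta_5\in[0,\pi/2)$ satisfy $n_1\sin\theta_1=n_3\sin\theta_3=n_5\sin\theta_5$, and put $c_i=\cos\theta_i/n_i$ for $i=1,3,5$. Let $a_0>0$, $r_2>0$, $r_4>0$, $\tau>0$ and \[ a_1=2\pi c_3\frac{2c_1}{c_1+c_3},\qquad a_2=2\pi c_3\frac{c_1-c_3}{c_1+c_3},\qquad a_5=\frac{2c_5}{c_5+c_3}. \] Define the real $3\times 3$ matrices \[ A=\begin{pmatrix}-a_1r_2&0&a_1a_0\\0&-(a_1-a_2)r_4a_5&0\\0&0&-1\end{pmatrix},\quad B=\begin{pmatrix}0&0&0\\-a_5a_1r_2&0&a_2a_0a_5\\0&-\frac{a_5r_4}{a_0}&0\end{pmatrix}, \] \[ C=\begin{pmatrix}0&0&0\\0&0&0\\-\frac{a_1r_2(a_5-1)}{(a_1-a_2)a_0}&0&\frac{a_2(a_5-1)}{a_1-a_2}\end{pmatrix}, \] and for $\epsilon\ge 0$ let $E(\epsilon)=\mathrm{diag}(1,1,\epsilon)$ and \[ \Delta(\epsilon,s)=sE(\epsilon)-A-Be^{-\tau s}-Ce^{-2\tau s},\qquad s\in\mathbb{C}. \] Let $\sigma(\epsilon)=\{\lambda\in\mathbb{C}:\det\Delta(\epsilon,\lambda)=0\}$. Then for every $\epsilon\ge 0$: (a) $0\in\sigma(\epsilon)$ and $\lambda=0$ is a simple root of $\det\Delta(\epsilon,\lambda)=0$; (b) every $\lambda\in\sigma(\epsilon)\setminus\{0\}$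 satisfies $\Re(\lambda)<0$.
   Context: Here $\Delta(\epsilon,s)$ is the characteristic matrix of the (for $\epsilon>0$ singularly perturbed) linear delay system $\frac{d}{dt}(E(\epsilon)x(t))=Ax(t)+Bx(t-\tau)+Cx(t-2\tau)+h(t)$ in $\mathbb{R}^3$. Note $a_1-a_2=2\pi c_3>0$. *)

theory Defs
  imports "HOL-Analysis.Analysis"
begin

text \<open>Coefficients of the model; c1 c3 c5 stand for cos(theta_i)/n_i.\<close>

definition coef_a1 :: "real \<Rightarrow> real \<Rightarrow> real" where
  "coef_a1 c1 c3 = 2 * pi * c3 * (2 * c1 / (c1 + c3))"

definition coef_a2 :: "real \<Rightarrow> real \<Rightarrow> real" where
  "coef_a2 c1 c3 = 2 * pi * c3 * ((c1 - c3) / (c1 + c3))"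

definition coef_a5 :: "real \<Rightarrow> real \<Rightarrow> real" where
  "coef_a5 c3 c5 = 2 * c5 / (c5 + c3)"

definition matA :: "real \<Rightarrow> real \<Rightarrow> real \<Rightarrow> real \<Rightarrow> real \<Rightarrow> real \<Rightarrow> real^3^3" where
  "matA a0 r2 r4 a1 a2 a5 = vector [
     vector [- a1 * r2, 0, a1 * a0],
     vector [0, - (a1 - a2) * r4 * a5, 0],
     vector [0, 0, -1]]"

definition matB :: "real \<Rightarrow> real \<Rightarrow> real \<Rightarrow> real \<Rightarrow> real \<Rightarrow> real \<Rightarrow> real^3^3" where
  "matB a0 r2 r4 a1 a2 a5 = vector [
     vector [0, 0, 0],
     vector [- a5 * a1 * r2, 0, a2 * a0 * a5],
     vector [0, - (a5 * r4 / a0), 0]]"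

definition matC :: "real \<Rightarrow> real \<Rightarrow> real \<Rightarrow> real \<Rightarrow> real \<Rightarrow> real \<Rightarrow> real^3^3" where
  "matC a0 r2 r4 a1 a2 a5 = vector [
     vector [0, 0, 0],
     vector [0, 0, 0],
     vector [- (a1 * r2 * (a5 - 1) / ((a1 - a2) * a0)), 0, a2 * (a5 - 1) / (a1 - a2)]]"

definition matE :: "real \<Rightarrow> real^3^3" where
  "matE eps = vector [vector [1, 0, 0], vector [0, 1, 0], vector [0, 0, eps]]"

definition charmat ::
  "real \<Rightarrow> real \<Rightarrow> real \<Rightarrow> real \<Rightarrow> real \<Rightarrow> real \<Rightarrow> real \<Rightarrow> real \<Rightarrow> complex \<Rightarrow> complex^3^3" where
  "charmat a0 r2 r4 tau c1 c3 c5 eps s =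
     (let a1 = coef_a1 c1 c3; a2 = coef_a2 c1 c3; a5 = coef_a5 c3 c5;
          A = matA a0 r2 r4 a1 a2 a5; B = matB a0 r2 r4 a1 a2 a5; C = matC a0 r2 r4 a1 a2 a5
      in (\<chi> i j. s * of_real (matE eps $ i $ j) - of_real (A $ i $ j)
                 - of_real (B $ i $ j) * exp (- (of_real tau * s))
                 - of_real (C $ i $ j) * exp (- (2 * of_real tau * s))))"

end

theory Submission
  imports Defs
begin

lemma det_formula:
  fixes a0 r2 r4 tau c1 c3 c5 eps :: real and s :: complex
  assumes "a0 \<noteq> 0" "coef_a1 c1 c3 \<noteq> coef_a2 c1 c3"
  defines "a1 \<equiv> coef_a1 c1 c3" and "a2 \<equiv> coef_a2 c1 c3" and "a5 \<equiv> coef_a5 c3 c5"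
  shows "det (charmat a0 r2 r4 tau c1 c3 c5 eps s) =
    (s + of_real (a1*r2)) * (s + of_real ((a1-a2)*r4*a5)) * (of_real eps * s + 1)
    - exp (- (of_real tau * s))^2 * (of_real (a1*r2) - of_real (a2/(a1-a2)) * s)
        * (of_real ((a1-a2)*r4*a5) - of_real (a5 - 1) * s)"
proof -
  define x where "x = exp (- (of_real tau * s))"
  have e2: "exp (- (2 * of_real tau * s)) = x^2"
    unfolding x_def by (subst power2_eq_square, subst exp_add[symmetric]) (simp add: algebra_simps)
  have d: "complex_of_real a1 - of_real a2 \<noteq> 0" using assms(2) unfolding a1_def a2_def
    by (metis of_real_diff of_real_eq_0_iff right_minus_eq)
  have d': "complex_of_real a2 - of_real a1 \<noteq> 0" using d by (metis right_minus_eq)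
  have a0: "complex_of_real a0 \<noteq> 0" using assms(1) by simp
  have inv1: "inverse (complex_of_real a1 - of_real a2) * (complex_of_real a1 - of_real a2) = 1" using d by simp
  have inv2: "inverse (complex_of_real a0) * complex_of_real a0 = 1" using a0 by simp
  show ?thesis
    unfolding det_3 charmat_def Let_def e2 a1_def[symmetric] a2_def[symmetric] a5_def[symmetric] x_def[symmetric]
    apply (simp only: matA_def matB_def matC_def matE_def vector_3 vec_lambda_beta of_real_mult of_real_diff of_real_minus of_real_divide of_real_0 of_real_1 divide_inverse of_real_inverse of_real_diff of_real_mult inverse_mult_distrib)
    using inv1 inv2 by algebra
qed

lemma norm_cmp:
  fixes al rho :: real and z :: complex
  assumes "al > 0" "\<bar>rho\<bar> < 1" "Re z \<ge> 0" "z \<noteq> 0"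
  shows "cmod (of_real al - of_real rho * z) < cmod (z + of_real al)"
proof -
  have h: "cmod (z + of_real al)^2 - cmod (of_real al - of_real rho * z)^2
        = (1 - rho^2) * (Re z^2 + Im z^2) + 2 * al * (1 + rho) * Re z"
    unfolding cmod_power2 by (simp add: algebra_simps power2_eq_square)
  have "0 < cmod z ^ 2" using assms(4) by simp
  then have p: "Re z^2 + Im z^2 > 0" by (simp only: cmod_power2)
  have r: "1 - rho^2 > 0" using assms(2) by (simp add: abs_square_less_1)
  have "(1 - rho^2) * (Re z^2 + Im z^2) > 0" using p r by simp
  moreover have "2 * al * (1 + rho) * Re z \<ge> 0" using assms by simp
  ultimately have "cmod (of_real al - of_real rho * z)^2 < cmod (z + of_real al)^2"
    using h by linarith
  then show ?thesis by (simp add: power2_less_imp_less)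
qed

lemma gen_roots:
  fixes al be rho k eps tau :: real and z :: complex
  assumes al: "al > 0" and be: "be > 0" and rho: "\<bar>rho\<bar> < 1" and k: "\<bar>k\<bar> < 1"
    and eps: "eps \<ge> 0" and tau: "tau > 0" and z0: "z \<noteq> 0" and rz: "Re z \<ge> 0"
  shows "(z + of_real al) * (z + of_real be) * (of_real eps * z + 1)
        \<noteq> exp (- (of_real tau * z))^2 * (of_real al - of_real rho * z) * (of_real be - of_real k * z)"
proof
  assume eq: "(z + of_real al) * (z + of_real be) * (of_real eps * z + 1)
        = exp (- (of_real tau * z))^2 * (of_real al - of_real rho * z) * (of_real be - of_real k * z)"
  have n1: "cmod (of_real al - of_real rho * z) < cmod (z + of_real al)"
    using norm_cmp[OF al rho rz z0] .
  have n2: "cmod (of_real be - of_real k * z) < cmod (z + of_real be)"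
    using norm_cmp[OF be k rz z0] .
  have n3: "cmod (of_real eps * z + 1) \<ge> 1"
  proof -
    have "1 \<le> Re (of_real eps * z + 1)" using eps rz by simp
    also have "\<dots> \<le> cmod (of_real eps * z + 1)" by (rule complex_Re_le_cmod)
    finally show ?thesis .
  qed
  have n4: "cmod (exp (- (of_real tau * z))^2) \<le> 1"
  proof -
    have "cmod (exp (- (of_real tau * z))) = exp (- (tau * Re z))" by (simp add: norm_exp_eq_Re)
    also have "\<dots> \<le> 1" using tau rz by simp
    finally have "cmod (exp (- (of_real tau * z))) \<le> 1" .
    then show ?thesis by (simp add: norm_power power_le_one)
  qed
  define A where "A = cmod (exp (- (of_real tau * z))^2)"
  define B where "B = cmod (of_real al - of_real rho * z)"
  define C where "C = cmod (of_real be - of_real k * z)"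
  define P where "P = cmod (z + of_real al)"
  define Q where "Q = cmod (z + of_real be)"
  define R where "R = cmod (of_real eps * z + 1)"
  have "P * Q * R = A * B * C" unfolding A_def B_def C_def P_def Q_def R_def
    unfolding norm_mult[symmetric] eq by (rule refl)
  moreover have "A * B * C \<le> B * C" using n4 unfolding A_def B_def C_def
    by (simp add: mult_left_le_one_le mult.assoc)
  moreover have "B * C < P * Q" using n1 n2 unfolding B_def C_def P_def Q_def
    by (intro mult_strict_mono) auto
  moreover have "P * Q \<le> P * Q * R"
    using n3 mult_left_mono[of 1 R "P * Q"] unfolding R_def P_def Q_def by simp
  ultimately show False by linarith
qed

lemma gen_deriv:
  fixes al be rho k eps tau :: real
  assumes al: "al > 0" and be: "be > 0" and rho: "\<bar>rho\<bar> < 1" and k: "\<bar>k\<bar> < 1"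
    and eps: "eps \<ge> 0" and tau: "tau > 0"
  shows "deriv (\<lambda>s::complex. (s + of_real al) * (s + of_real be) * (of_real eps * s + 1)
      - exp (- (of_real tau * s))^2 * (of_real al - of_real rho * s) * (of_real be - of_real k * s)) 0 \<noteq> 0"
proof -
  define L where "L = al + be + eps * al * be + 2 * tau * al * be + rho * be + k * al"
  have "((\<lambda>s::complex. (s + of_real al) * (s + of_real be) * (of_real eps * s + 1)
      - exp (- (of_real tau * s))^2 * (of_real al - of_real rho * s) * (of_real be - of_real k * s))
       has_field_derivative of_real L) (at 0)"
    unfolding L_def
    by (auto intro!: derivative_eq_intros simp: algebra_simps)
  then have d: "deriv (\<lambda>s::complex. (s + of_real al) * (s + of_real be) * (of_real eps * s + 1)
      - exp (- (of_real tau * s))^2 * (of_real al - of_real rho * s) * (of_real be - of_real k * s)) 0 = of_real L"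
    by (rule DERIV_imp_deriv)
  have "L > 0"
  proof -
    have "(1 + rho) * be > 0" using rho be by (intro mult_pos_pos) (auto simp: abs_less_iff)
    moreover have "(1 + k) * al > 0" using k al by (intro mult_pos_pos) (auto simp: abs_less_iff)
    moreover have "eps * al * be \<ge> 0" using eps al be by simp
    moreover have "tau * al * be > 0" using tau al be by simp
    ultimately show ?thesis unfolding L_def by (simp add: algebra_simps)
  qed
  then show ?thesis unfolding d by simp
qed

theorem lemma1:
  fixes n1 n3 n5 th1 th3 th5 a0 r2 r4 tau eps :: real
  assumes "n1 > 0" and "n3 > 0" and "n5 > 0"
    and "0 \<le> th1" and "th1 < pi / 2"
    and "0 \<le> th3" and "th3 < pi / 2"
    and "0 \<le> th5" and "th5 < pi / 2"
    and "n1 * sin th1 = n3 * sin th3" and "n3 * sin th3 = n5 * sin th5"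
    and "a0 > 0" and "r2 > 0" and "r4 > 0" and "tau > 0"
    and "eps \<ge> 0"
  shows "let D = (\<lambda>s. det (charmat a0 r2 r4 tau (cos th1 / n1) (cos th3 / n3) (cos th5 / n5) eps s))
         in D 0 = 0 \<and> deriv D 0 \<noteq> 0 \<and> (\<forall>z. D z = 0 \<and> z \<noteq> 0 \<longrightarrow> Re z < 0)"
proof -
  define c1 where "c1 = cos th1 / n1"
  define c3 where "c3 = cos th3 / n3"
  define c5 where "c5 = cos th5 / n5"
  have c1: "c1 > 0" unfolding c1_def using assms by (intro divide_pos_pos cos_gt_zero_pi) auto
  have c3: "c3 > 0" unfolding c3_def using assms by (intro divide_pos_pos cos_gt_zero_pi) auto
  have c5: "c5 > 0" unfolding c5_def using assms by (intro divide_pos_pos cos_gt_zero_pi) auto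
  define a1 where "a1 = coef_a1 c1 c3"
  define a2 where "a2 = coef_a2 c1 c3"
  define a5 where "a5 = coef_a5 c3 c5"
  have q: "2 * c1 / (c1 + c3) - (c1 - c3) / (c1 + c3) = 1"
    using c1 c3 by (simp add: diff_divide_distrib[symmetric])
  have d: "a1 - a2 = 2 * pi * c3" unfolding a1_def a2_def coef_a1_def coef_a2_def
    using q by (metis mult.right_neutral right_diff_distrib)
  have dpos: "a1 - a2 > 0" unfolding d using c3 by simp
  have a1: "a1 > 0" unfolding a1_def coef_a1_def using c1 c3 by simp
  have a5: "a5 > 0" unfolding a5_def coef_a5_def using c3 c5 by simp
  have rhoe: "a2 / (a1 - a2) = (c1 - c3) / (c1 + c3)" unfolding d unfolding a2_def coef_a2_def
    using c3 by simp
  have rho: "\<bar>a2 / (a1 - a2)\<bar> < 1" unfolding rhoe using c1 c3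
    by (simp add: abs_less_iff field_simps)
  have ke: "a5 - 1 = (c5 - c3) / (c5 + c3)" unfolding a5_def coef_a5_def using c3 c5
    by (simp add: field_simps)
  have k: "\<bar>a5 - 1\<bar> < 1" unfolding ke using c5 c3
    by (simp add: abs_less_iff field_simps)
  have al: "a1 * r2 > 0" using a1 assms by simp
  have be: "(a1 - a2) * r4 * a5 > 0" using dpos a5 assms by simp
  define f where "f = (\<lambda>s::complex. (s + of_real (a1*r2)) * (s + of_real ((a1-a2)*r4*a5)) * (of_real eps * s + 1)
    - exp (- (of_real tau * s))^2 * (of_real (a1*r2) - of_real (a2/(a1-a2)) * s)
        * (of_real ((a1-a2)*r4*a5) - of_real (a5 - 1) * s))"
  have Deq: "(\<lambda>s. det (charmat a0 r2 r4 tau c1 c3 c5 eps s)) = f"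
  proof
    fix s
    show "det (charmat a0 r2 r4 tau c1 c3 c5 eps s) = f s"
      unfolding f_def a1_def a2_def a5_def
      by (rule det_formula) (use assms dpos a1_def a2_def in auto)
  qed
  have "f 0 = 0" unfolding f_def by simp
  moreover have "deriv f 0 \<noteq> 0" unfolding f_def
    by (rule gen_deriv[OF al be rho k assms(16) assms(15)])
  moreover have "Re z < 0" if z: "f z = 0" "z \<noteq> 0" for z
  proof (rule ccontr)
    assume "\<not> Re z < 0"
    then have "Re z \<ge> 0" by simp
    from gen_roots[OF al be rho k assms(16) assms(15) z(2) this] z(1) show False
      unfolding f_def by simp
  qed
  ultimately show ?thesis unfolding Let_def c1_def[symmetric] c3_def[symmetric] c5_def[symmetric] Deq
    by blast
qed

end
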